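(* Let $R$ be a ring, $\mathfrak{M}$ a formation of $R$-modules, $G$ a group and $A$ an $RG$-module. Then $\mathbf{Coc}_{\mathfrak{M}}(G) = \{x \in G \mid A/C_A(x) \in \mathfrak{M}\}$ is a normal subgroup of $G$.
   Context: A class $\mathfrak{M}$ of $R$-modules (closed under isomorphism) is a formation if: (F1) whenever $A \in \mathfrak{M}$ and $B$ is an $R$-submodule of $A$, $A/B \in \mathfrak{M}$; (F2) whenever $A$ is an $R$-module and $B_1,\dots,B_k$ are submodules with $A/B_j \in \mathfrak{M}$ for all $j$, then $A/(B_1\cap\dots\cap B_k) \in \mathfrak{M}$. For $x \in G$, $C_A(x) = \{a\in A \mid ax = a\}$. *)

theory Defs
  imports "HOL-Algebra.Algebra"
begin

text \<open>The library locale module requires a commutative ring, so we define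
(left) R-modules over an arbitrary ring R ourselves, with the same axioms.\<close>

definition rmodule :: "('r, 'm) ring_scheme \<Rightarrow> ('r, 'a, 'c) module_scheme \<Rightarrow> bool" where
  "rmodule R A \<longleftrightarrow> ring R \<and> abelian_group A \<and>
    (\<forall>r\<in>carrier R. \<forall>a\<in>carrier A. r \<odot>\<^bsub>A\<^esub> a \<in> carrier A) \<and>
    (\<forall>r\<in>carrier R. \<forall>s\<in>carrier R. \<forall>a\<in>carrier A.
        (r \<oplus>\<^bsub>R\<^esub> s) \<odot>\<^bsub>A\<^esub> a = r \<odot>\<^bsub>A\<^esub> a \<oplus>\<^bsub>A\<^esub> s \<odot>\<^bsub>A\<^esub> a) \<and>
    (\<forall>r\<in>carrier R. \<forall>a\<in>carrier A. \<forall>b\<in>carrier A.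
        r \<odot>\<^bsub>A\<^esub> (a \<oplus>\<^bsub>A\<^esub> b) = r \<odot>\<^bsub>A\<^esub> a \<oplus>\<^bsub>A\<^esub> r \<odot>\<^bsub>A\<^esub> b) \<and>
    (\<forall>r\<in>carrier R. \<forall>s\<in>carrier R. \<forall>a\<in>carrier A.
        (r \<otimes>\<^bsub>R\<^esub> s) \<odot>\<^bsub>A\<^esub> a = r \<odot>\<^bsub>A\<^esub> (s \<odot>\<^bsub>A\<^esub> a)) \<and>
    (\<forall>a\<in>carrier A. \<one>\<^bsub>R\<^esub> \<odot>\<^bsub>A\<^esub> a = a)"

definition rsubmodule :: "'a set \<Rightarrow> ('r, 'm) ring_scheme \<Rightarrow> ('r, 'a, 'c) module_scheme \<Rightarrow> bool" where
  "rsubmodule B R A \<longleftrightarrow> subgroup B (add_monoid A) \<and>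
    (\<forall>r\<in>carrier R. \<forall>b\<in>B. r \<odot>\<^bsub>A\<^esub> b \<in> B)"

text \<open>The quotient module A/B: carrier are the cosets B + a, addition is
addition of cosets, zero is B, and r(B + a) = B + ra (written without choice
as the union over representatives). The ring multiplication fields of the
record are irrelevant and left undefined.\<close>
definition quot_mod :: "('r, 'a, 'c) module_scheme \<Rightarrow> 'a set \<Rightarrow> ('r, 'a set) module" where
  "quot_mod A B = \<lparr> carrier = a_rcosets\<^bsub>A\<^esub> B,
                     monoid.mult = (\<lambda>u v. undefined), monoid.one = undefined,
                     ring.zero = B, ring.add = set_add A,
                     module.smult = (\<lambda>r U. \<Union>a\<in>U. a_r_coset A B (r \<odot>\<^bsub>A\<^esub> a)) \<rparr>"

definition rmod_iso :: "('r, 'm) ring_scheme \<Rightarrow> ('r, 'a, 'c) module_scheme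
    \<Rightarrow> ('r, 'b, 'd) module_scheme \<Rightarrow> ('a \<Rightarrow> 'b) \<Rightarrow> bool" where
  "rmod_iso R A A' f \<longleftrightarrow> bij_betw f (carrier A) (carrier A') \<and>
    (\<forall>a\<in>carrier A. \<forall>b\<in>carrier A. f (a \<oplus>\<^bsub>A\<^esub> b) = f a \<oplus>\<^bsub>A'\<^esub> f b) \<and>
    (\<forall>r\<in>carrier R. \<forall>a\<in>carrier A. f (r \<odot>\<^bsub>A\<^esub> a) = r \<odot>\<^bsub>A'\<^esub> f a)"

definition rmod_isomorphic :: "('r, 'm) ring_scheme \<Rightarrow> ('r, 'a, 'c) module_scheme
    \<Rightarrow> ('r, 'b, 'd) module_scheme \<Rightarrow> bool" where
  "rmod_isomorphic R A A' \<longleftrightarrow> (\<exists>f. rmod_iso R A A' f)"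

text \<open>A class of R-modules is represented by a predicate M on R-modules whose
carrier lives in a fixed universe type 'a. A module of any other type belongs
to the class (up to isomorphism) if it is isomorphic to a member of M.\<close>
definition in_class :: "('r, 'm) ring_scheme \<Rightarrow> (('r, 'a) module \<Rightarrow> bool)
    \<Rightarrow> ('r, 'b, 'd) module_scheme \<Rightarrow> bool" where
  "in_class R M Q \<longleftrightarrow> (\<exists>Q'. M Q' \<and> rmod_isomorphic R Q' Q)"

definition formation :: "('r, 'm) ring_scheme \<Rightarrow> (('r, 'a) module \<Rightarrow> bool) \<Rightarrow> bool" where
  "formation R M \<longleftrightarrow>
     (\<forall>A. M A \<longrightarrow> rmodule R A) \<and>
     (\<forall>A A'. M A \<and> rmodule R A' \<and> rmod_isomorphic R A A' \<longrightarrow> M A') \<and>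
     (\<forall>A B. M A \<and> rsubmodule B R A \<longrightarrow> in_class R M (quot_mod A B)) \<and>
     (\<forall>(A :: ('r, 'a) module) Bs. rmodule R A \<and> finite Bs \<and> Bs \<noteq> {} \<and>
        (\<forall>B\<in>Bs. rsubmodule B R A \<and> in_class R M (quot_mod A B))
        \<longrightarrow> in_class R M (quot_mod A (\<Inter>Bs)))"

text \<open>An RG-module: an R-module A with a right action of the group G by
R-module automorphisms, written act a x for the image ax of a under x.\<close>
definition rg_module :: "('r, 'm) ring_scheme \<Rightarrow> ('g, 'n) monoid_scheme
    \<Rightarrow> ('r, 'a, 'c) module_scheme \<Rightarrow> ('a \<Rightarrow> 'g \<Rightarrow> 'a) \<Rightarrow> bool" where
  "rg_module R G A act \<longleftrightarrow> rmodule R A \<and> group G \<and>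
    (\<forall>x\<in>carrier G. \<forall>a\<in>carrier A. act a x \<in> carrier A) \<and>
    (\<forall>x\<in>carrier G. \<forall>a\<in>carrier A. \<forall>b\<in>carrier A.
        act (a \<oplus>\<^bsub>A\<^esub> b) x = act a x \<oplus>\<^bsub>A\<^esub> act b x) \<and>
    (\<forall>x\<in>carrier G. \<forall>r\<in>carrier R. \<forall>a\<in>carrier A.
        act (r \<odot>\<^bsub>A\<^esub> a) x = r \<odot>\<^bsub>A\<^esub> act a x) \<and>
    (\<forall>a\<in>carrier A. act a \<one>\<^bsub>G\<^esub> = a) \<and>
    (\<forall>x\<in>carrier G. \<forall>y\<in>carrier G. \<forall>a\<in>carrier A.
        act (act a x) y = act a (x \<otimes>\<^bsub>G\<^esub> y))"

definition centralizer_mod :: "('r, 'a, 'c) module_scheme \<Rightarrow> ('a \<Rightarrow> 'g \<Rightarrow> 'a) \<Rightarrow> 'g \<Rightarrow> 'a set" where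
  "centralizer_mod A act x = {a \<in> carrier A. act a x = a}"

definition Coc :: "('r, 'm) ring_scheme \<Rightarrow> (('r, 'a) module \<Rightarrow> bool) \<Rightarrow> ('g, 'n) monoid_scheme
    \<Rightarrow> ('r, 'a, 'c) module_scheme \<Rightarrow> ('a \<Rightarrow> 'g \<Rightarrow> 'a) \<Rightarrow> 'g set" where
  "Coc R M G A act = {x \<in> carrier G. in_class R M (quot_mod A (centralizer_mod A act x))}"

end

theory Submission
  imports Defs
begin

lemma rsub_abs:
  assumes "rmodule R A" "rsubmodule E R A" shows "abelian_subgroup E A"
  using assms by (intro abelian_subgroupI3 additive_subgroupI) (auto simp: rmodule_def rsubmodule_def)

lemma (in abelian_subgroup) coset_eq_iff:
  "x \<in> carrier G \<Longrightarrow> y \<in> carrier G \<Longrightarrow> (H +> x = H +> y) \<longleftrightarrow> x \<oplus> \<ominus> y \<in> H"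
proof
  assume "x \<in> carrier G" "y \<in> carrier G" "H +> x = H +> y"
  then have "x \<in> H +> y" using a_rcos_self by metis
  then show "x \<oplus> \<ominus> y \<in> H" using a_rcos_module_imp \<open>y \<in> carrier G\<close> by blast
next
  assume "x \<in> carrier G" "y \<in> carrier G" "x \<oplus> \<ominus> y \<in> H"
  then have "x \<in> H +> y" using a_rcos_module_rev by blast
  then show "H +> x = H +> y" using a_repr_independence' \<open>y \<in> carrier G\<close> by metis
qed

lemma (in abelian_subgroup) coset_eq_H:
  "x \<in> carrier G \<Longrightarrow> (H +> x = H) \<longleftrightarrow> x \<in> H"
  using a_coset_join1 a_coset_join2 a_subgroup by blast

lemma coset_mono:
  assumes "abelian_subgroup D A" "abelian_subgroup E A" "D \<subseteq> E"
    "x \<in> carrier A" "y \<in> carrier A" "D +>\<^bsub>A\<^esub> x = D +>\<^bsub>A\<^esub> y"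
  shows "E +>\<^bsub>A\<^esub> x = E +>\<^bsub>A\<^esub> y"
proof -
  have "x \<oplus>\<^bsub>A\<^esub> \<ominus>\<^bsub>A\<^esub> y \<in> D" using abelian_subgroup.coset_eq_iff[OF assms(1) assms(4,5)] assms(6) by simp
  then show ?thesis using abelian_subgroup.coset_eq_iff[OF assms(2) assms(4,5)] assms(3) by blast
qed

lemma quot_smult:
  assumes A: "rmodule R A" and E: "rsubmodule E R A" and a: "a \<in> carrier A" and r: "r \<in> carrier R"
  shows "r \<odot>\<^bsub>quot_mod A E\<^esub> (E +>\<^bsub>A\<^esub> a) = E +>\<^bsub>A\<^esub> (r \<odot>\<^bsub>A\<^esub> a)"
proof -
  interpret EA: abelian_subgroup E A using rsub_abs[OF A E] .
  have ra: "r \<odot>\<^bsub>A\<^esub> a \<in> carrier A" using A a r by (simp add: rmodule_def)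
  have "E +>\<^bsub>A\<^esub> (r \<odot>\<^bsub>A\<^esub> x) = E +>\<^bsub>A\<^esub> (r \<odot>\<^bsub>A\<^esub> a)" if x: "x \<in> E +>\<^bsub>A\<^esub> a" for x
  proof -
    obtain e where e: "e \<in> E" "x = e \<oplus>\<^bsub>A\<^esub> a" using x unfolding a_r_coset_def' by auto
    have ec: "e \<in> carrier A" using e EA.a_Hcarr by blast
    have "r \<odot>\<^bsub>A\<^esub> x = r \<odot>\<^bsub>A\<^esub> e \<oplus>\<^bsub>A\<^esub> r \<odot>\<^bsub>A\<^esub> a"
      using A r ec a e(2) by (simp add: rmodule_def)
    moreover have "r \<odot>\<^bsub>A\<^esub> e \<in> E" using E r e(1) by (simp add: rsubmodule_def)
    ultimately have "r \<odot>\<^bsub>A\<^esub> x \<in> E +>\<^bsub>A\<^esub> (r \<odot>\<^bsub>A\<^esub> a)"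
      using EA.a_rcosI EA.a_subset ra by simp
    then show ?thesis using EA.a_repr_independence' ra by metis
  qed
  moreover have "a \<in> E +>\<^bsub>A\<^esub> a" using EA.a_rcos_self a by blast
  ultimately have "(\<Union>x\<in>E +>\<^bsub>A\<^esub> a. E +>\<^bsub>A\<^esub> (r \<odot>\<^bsub>A\<^esub> x)) = E +>\<^bsub>A\<^esub> (r \<odot>\<^bsub>A\<^esub> a)"
    by (metis (no_types, lifting) SUP_constant SUP_cong empty_iff)
  moreover have "r \<odot>\<^bsub>quot_mod A E\<^esub> U = (\<Union>x\<in>U. E +>\<^bsub>A\<^esub> (r \<odot>\<^bsub>A\<^esub> x))" for U
    by (simp add: quot_mod_def)
  ultimately show ?thesis by simp
qed

lemma iso_trans:
  assumes "rmod_isomorphic R A B" "rmod_isomorphic R B C" shows "rmod_isomorphic R A C"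
proof -
  obtain f g where f: "rmod_iso R A B f" and g: "rmod_iso R B C g"
    using assms unfolding rmod_isomorphic_def by blast
  have fc: "\<And>a. a \<in> carrier A \<Longrightarrow> f a \<in> carrier B" using f unfolding rmod_iso_def bij_betw_def by auto
  have "rmod_iso R A C (g \<circ> f)"
    using f g fc unfolding rmod_iso_def by (auto intro: bij_betw_trans)
  then show ?thesis unfolding rmod_isomorphic_def by blast
qed

lemma in_class_trans:
  "in_class R M Q \<Longrightarrow> rmod_isomorphic R Q Q2 \<Longrightarrow> in_class R M Q2"
  unfolding in_class_def using iso_trans by blast


lemma FIT:
  fixes Q :: "('r,'q,'c) module_scheme" and A :: "('r,'b,'d) module_scheme"
  assumes Q: "rmodule R Q" and A: "rmodule R A" and E: "rsubmodule E R A"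
    and sc: "\<And>q. q \<in> carrier Q \<Longrightarrow> \<sigma> q \<in> carrier A"
    and sadd: "\<And>p q. p \<in> carrier Q \<Longrightarrow> q \<in> carrier Q \<Longrightarrow>
        E +>\<^bsub>A\<^esub> \<sigma> (p \<oplus>\<^bsub>Q\<^esub> q) = E +>\<^bsub>A\<^esub> (\<sigma> p \<oplus>\<^bsub>A\<^esub> \<sigma> q)"
    and ssm: "\<And>r q. r \<in> carrier R \<Longrightarrow> q \<in> carrier Q \<Longrightarrow>
        E +>\<^bsub>A\<^esub> \<sigma> (r \<odot>\<^bsub>Q\<^esub> q) = E +>\<^bsub>A\<^esub> (r \<odot>\<^bsub>A\<^esub> \<sigma> q)"
    and ssurj: "\<And>a. a \<in> carrier A \<Longrightarrow> \<exists>q\<in>carrier Q. E +>\<^bsub>A\<^esub> \<sigma> q = E +>\<^bsub>A\<^esub> a"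
  shows "rsubmodule {q\<in>carrier Q. \<sigma> q \<in> E} R Q \<and>
         rmod_isomorphic R (quot_mod Q {q\<in>carrier Q. \<sigma> q \<in> E}) (quot_mod A E)"
proof -
  interpret EA: abelian_subgroup E A using rsub_abs[OF A E] .
  interpret QQ: abelian_group Q using Q by (simp add: rmodule_def)
  define K where "K = {q\<in>carrier Q. \<sigma> q \<in> E}"
  define \<pi> where "\<pi> q = E +>\<^bsub>A\<^esub> \<sigma> q" for q
  have fg: "group (A A_Mod E)" by (rule EA.a_factorgroup_is_group)
  have pic: "\<pi> q \<in> carrier (A A_Mod E)" if "q \<in> carrier Q" for q
    using EA.a_rcosetsI[OF EA.a_subset sc[OF that]]
    by (simp add: \<pi>_def A_FactGroup_def FactGroup_def A_RCOSETS_def)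
  have pimul: "\<pi> (p \<oplus>\<^bsub>Q\<^esub> q) = \<pi> p \<otimes>\<^bsub>A A_Mod E\<^esub> \<pi> q" if "p \<in> carrier Q" "q \<in> carrier Q" for p q
    using sadd[OF that] EA.a_rcos_sum[OF sc[OF that(1)] sc[OF that(2)]] by (simp add: \<pi>_def)
  have hom: "group_hom (add_monoid Q) (A A_Mod E) \<pi>"
    unfolding group_hom_def group_hom_axioms_def hom_def
    using QQ.a_group fg pic pimul by auto
  have ker: "kernel (add_monoid Q) (A A_Mod E) \<pi> = K"
    unfolding kernel_def K_def \<pi>_def using EA.coset_eq_H sc by (auto simp: A_FactGroup_def FactGroup_def)
  have subK: "subgroup K (add_monoid Q)" using group_hom.subgroup_kernel[OF hom] ker by simp
  have Kc: "K \<subseteq> carrier Q" unfolding K_def by auto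
  have rsub: "rsubmodule K R Q"
    unfolding rsubmodule_def
  proof (intro conjI ballI subK)
    fix r b assume r: "r \<in> carrier R" and b: "b \<in> K"
    have bc: "b \<in> carrier Q" "\<sigma> b \<in> E" using b unfolding K_def by auto
    have rb: "r \<odot>\<^bsub>Q\<^esub> b \<in> carrier Q" using Q r bc by (simp add: rmodule_def)
    have "r \<odot>\<^bsub>A\<^esub> \<sigma> b \<in> E" using E r bc by (simp add: rsubmodule_def)
    then have "E +>\<^bsub>A\<^esub> (r \<odot>\<^bsub>A\<^esub> \<sigma> b) = E" using EA.coset_eq_H EA.a_Hcarr by blast
    then have "E +>\<^bsub>A\<^esub> \<sigma> (r \<odot>\<^bsub>Q\<^esub> b) = E" using ssm[OF r bc(1)] by simp
    then have "\<sigma> (r \<odot>\<^bsub>Q\<^esub> b) \<in> E" using EA.coset_eq_H sc[OF rb] by blast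
    then show "r \<odot>\<^bsub>Q\<^esub> b \<in> K" using rb unfolding K_def by simp
  qed
  have surj: "\<pi> ` carrier (add_monoid Q) = carrier (A A_Mod E)"
  proof
    show "\<pi> ` carrier (add_monoid Q) \<subseteq> carrier (A A_Mod E)" using pic by auto
    show "carrier (A A_Mod E) \<subseteq> \<pi> ` carrier (add_monoid Q)"
    proof
      fix Z assume "Z \<in> carrier (A A_Mod E)"
      then obtain a where a: "a \<in> carrier A" "Z = E +>\<^bsub>A\<^esub> a"
        by (auto simp: A_FactGroup_def FactGroup_def RCOSETS_def a_r_coset_def)
      obtain q where "q \<in> carrier Q" "E +>\<^bsub>A\<^esub> \<sigma> q = E +>\<^bsub>A\<^esub> a" using ssurj[OF a(1)] by blast
      then show "Z \<in> \<pi> ` carrier (add_monoid Q)" using a by (auto simp: \<pi>_def)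
    qed
  qed
  define f where "f = (\<lambda>U. the_elem (\<pi> ` U))"
  have iso: "f \<in> iso (add_monoid Q Mod K) (A A_Mod E)"
    using group_hom.FactGroup_iso_set[OF hom surj] ker by (simp add: f_def)
  have carQ: "carrier (add_monoid Q Mod K) = carrier (quot_mod Q K)"
    by (simp add: FactGroup_def quot_mod_def A_RCOSETS_def)
  have carA: "carrier (A A_Mod E) = carrier (quot_mod A E)"
    by (simp add: A_FactGroup_def FactGroup_def quot_mod_def A_RCOSETS_def)
  interpret KQ: abelian_subgroup K Q using rsub_abs[OF Q rsub] .
  have fcos: "f (K +>\<^bsub>Q\<^esub> q) = \<pi> q" if q: "q \<in> carrier Q" for q
  proof -
    have "\<pi> x = \<pi> q" if x: "x \<in> K +>\<^bsub>Q\<^esub> q" for x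
    proof -
      obtain k where k: "k \<in> K" "x = k \<oplus>\<^bsub>Q\<^esub> q" using x unfolding a_r_coset_def' by auto
      have kc: "k \<in> carrier Q" using k Kc by auto
      have "\<pi> k = E" using k EA.coset_eq_H sc[OF kc] unfolding K_def \<pi>_def by auto
      then have "\<pi> x = E <+>\<^bsub>A\<^esub> \<pi> q" using pimul[OF kc q] k(2) by simp
      also have "\<dots> = \<pi> q" using EA.rcosets_add_eq pic[OF q]
        by (simp add: A_FactGroup_def FactGroup_def A_RCOSETS_def)
      finally show ?thesis .
    qed
    moreover have "q \<in> K +>\<^bsub>Q\<^esub> q" using KQ.a_rcos_self q by blast
    ultimately have "\<pi> ` (K +>\<^bsub>Q\<^esub> q) = {\<pi> q}" by blast
    then show ?thesis by (simp add: f_def)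
  qed
  have "rmod_iso R (quot_mod Q K) (quot_mod A E) f"
    unfolding rmod_iso_def
  proof (intro conjI ballI)
    show "bij_betw f (carrier (quot_mod Q K)) (carrier (quot_mod A E))"
      using iso carQ carA by (simp add: iso_def)
  next
    fix U V assume U: "U \<in> carrier (quot_mod Q K)" and V: "V \<in> carrier (quot_mod Q K)"
    have "f (U \<otimes>\<^bsub>add_monoid Q Mod K\<^esub> V) = f U \<otimes>\<^bsub>A A_Mod E\<^esub> f V"
      using iso U V carQ unfolding iso_def hom_def by auto
    then show "f (U \<oplus>\<^bsub>quot_mod Q K\<^esub> V) = f U \<oplus>\<^bsub>quot_mod A E\<^esub> f V"
      by (simp add: FactGroup_def quot_mod_def set_add_def)
  next
    fix r U assume r: "r \<in> carrier R" and U: "U \<in> carrier (quot_mod Q K)"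
    then obtain q where q: "q \<in> carrier Q" "U = K +>\<^bsub>Q\<^esub> q"
      by (auto simp: quot_mod_def A_RCOSETS_def' )
    have rq: "r \<odot>\<^bsub>Q\<^esub> q \<in> carrier Q" using Q r q by (simp add: rmodule_def)
    have "f (r \<odot>\<^bsub>quot_mod Q K\<^esub> U) = \<pi> (r \<odot>\<^bsub>Q\<^esub> q)"
      using quot_smult[OF Q rsub q(1) r] fcos[OF rq] q(2) by simp
    also have "\<dots> = E +>\<^bsub>A\<^esub> (r \<odot>\<^bsub>A\<^esub> \<sigma> q)" using ssm[OF r q(1)] by (simp add: \<pi>_def)
    also have "\<dots> = r \<odot>\<^bsub>quot_mod A E\<^esub> \<pi> q" using quot_smult[OF A E sc[OF q(1)] r] by (simp add: \<pi>_def)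
    finally show "f (r \<odot>\<^bsub>quot_mod Q K\<^esub> U) = r \<odot>\<^bsub>quot_mod A E\<^esub> f U" using fcos[OF q(1)] q(2) by simp
  qed
  then show ?thesis using rsub unfolding K_def rmod_isomorphic_def by blast
qed


lemma Qlem:
  fixes A :: "('r,'b,'d) module_scheme" and M :: "('r, 'a) module \<Rightarrow> bool"
  assumes F: "formation R M" and A: "rmodule R A"
    and D: "rsubmodule D R A" and E: "rsubmodule E R A" and DE: "D \<subseteq> E"
    and C: "in_class R M (quot_mod A D)"
  shows "in_class R M (quot_mod A E)"
proof -
  interpret EA: abelian_subgroup E A using rsub_abs[OF A E] .
  interpret DA: abelian_subgroup D A using rsub_abs[OF A D] .
  obtain Q f where MQ: "M Q" and f: "rmod_iso R Q (quot_mod A D) f"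
    using C unfolding in_class_def rmod_isomorphic_def by blast
  have Q: "rmodule R Q" using F MQ unfolding formation_def by blast
  interpret QQ: abelian_group Q using Q by (simp add: rmodule_def)
  have fc: "f q \<in> a_rcosets\<^bsub>A\<^esub> D" if "q \<in> carrier Q" for q
    using f that unfolding rmod_iso_def bij_betw_def by (auto simp: quot_mod_def)
  define \<sigma> where "\<sigma> q = (SOME a. a \<in> carrier A \<and> f q = D +>\<^bsub>A\<^esub> a)" for q
  have sig: "\<sigma> q \<in> carrier A \<and> f q = D +>\<^bsub>A\<^esub> \<sigma> q" if "q \<in> carrier Q" for q
  proof -
    have "\<exists>a. a \<in> carrier A \<and> f q = D +>\<^bsub>A\<^esub> a" using fc[OF that] unfolding A_RCOSETS_def' by auto
    then show ?thesis unfolding \<sigma>_def by (rule someI_ex)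
  qed
  have mono: "E +>\<^bsub>A\<^esub> x = E +>\<^bsub>A\<^esub> y" if "x \<in> carrier A" "y \<in> carrier A" "D +>\<^bsub>A\<^esub> x = D +>\<^bsub>A\<^esub> y" for x y
    using coset_mono[OF DA.is_abelian_subgroup EA.is_abelian_subgroup DE that] .
  have K: "rsubmodule {q\<in>carrier Q. \<sigma> q \<in> E} R Q \<and>
         rmod_isomorphic R (quot_mod Q {q\<in>carrier Q. \<sigma> q \<in> E}) (quot_mod A E)"
  proof (rule FIT[OF Q A E])
    show "\<sigma> q \<in> carrier A" if "q \<in> carrier Q" for q using sig[OF that] by blast
  next
    fix p q assume p: "p \<in> carrier Q" and q: "q \<in> carrier Q"
    have pq: "p \<oplus>\<^bsub>Q\<^esub> q \<in> carrier Q" using p q by simp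
    have "D +>\<^bsub>A\<^esub> \<sigma> (p \<oplus>\<^bsub>Q\<^esub> q) = f (p \<oplus>\<^bsub>Q\<^esub> q)" using sig[OF pq] by simp
    also have "\<dots> = f p <+>\<^bsub>A\<^esub> f q" using f p q unfolding rmod_iso_def by (simp add: quot_mod_def)
    also have "\<dots> = D +>\<^bsub>A\<^esub> (\<sigma> p \<oplus>\<^bsub>A\<^esub> \<sigma> q)"
      using sig[OF p] sig[OF q] DA.a_rcos_sum by simp
    finally show "E +>\<^bsub>A\<^esub> \<sigma> (p \<oplus>\<^bsub>Q\<^esub> q) = E +>\<^bsub>A\<^esub> (\<sigma> p \<oplus>\<^bsub>A\<^esub> \<sigma> q)"
      using mono sig[OF pq] sig[OF p] sig[OF q] by simp
  next
    fix r q assume r: "r \<in> carrier R" and q: "q \<in> carrier Q"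
    have rq: "r \<odot>\<^bsub>Q\<^esub> q \<in> carrier Q" using Q r q by (simp add: rmodule_def)
    have rs: "r \<odot>\<^bsub>A\<^esub> \<sigma> q \<in> carrier A" using A r sig[OF q] by (simp add: rmodule_def)
    have "D +>\<^bsub>A\<^esub> \<sigma> (r \<odot>\<^bsub>Q\<^esub> q) = f (r \<odot>\<^bsub>Q\<^esub> q)" using sig[OF rq] by simp
    also have "\<dots> = r \<odot>\<^bsub>quot_mod A D\<^esub> f q" using f r q unfolding rmod_iso_def by simp
    also have "\<dots> = D +>\<^bsub>A\<^esub> (r \<odot>\<^bsub>A\<^esub> \<sigma> q)"
      unfolding conjunct2[OF sig[OF q]] by (rule quot_smult[OF A D conjunct1[OF sig[OF q]] r])
    finally show "E +>\<^bsub>A\<^esub> \<sigma> (r \<odot>\<^bsub>Q\<^esub> q) = E +>\<^bsub>A\<^esub> (r \<odot>\<^bsub>A\<^esub> \<sigma> q)"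
      by (rule mono[OF conjunct1[OF sig[OF rq]] rs])
  next
    fix a assume a: "a \<in> carrier A"
    have "D +>\<^bsub>A\<^esub> a \<in> carrier (quot_mod A D)"
      using EA.a_rcosetsI[OF DA.a_subset a] by (simp add: quot_mod_def)
    then obtain q where q: "q \<in> carrier Q" "f q = D +>\<^bsub>A\<^esub> a"
      using f unfolding rmod_iso_def bij_betw_def by (metis imageE)
    then show "\<exists>q\<in>carrier Q. E +>\<^bsub>A\<^esub> \<sigma> q = E +>\<^bsub>A\<^esub> a"
      using mono[OF conjunct1[OF sig[OF q(1)]] a] q(2) conjunct2[OF sig[OF q(1)]] by (metis q(1))
  qed
  have "in_class R M (quot_mod Q {q\<in>carrier Q. \<sigma> q \<in> E})"
    using F MQ K unfolding formation_def by blast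
  then show ?thesis using K in_class_trans by blast
qed


lemma cent_sub:
  assumes rg: "rg_module R G A act" and x: "x \<in> carrier G"
  shows "rsubmodule (centralizer_mod A act x) R A"
proof -
  have A: "rmodule R A" using rg by (simp add: rg_module_def)
  interpret AA: abelian_group A using A by (simp add: rmodule_def)
  have ac: "\<And>a. a \<in> carrier A \<Longrightarrow> act a x \<in> carrier A" using rg x by (simp add: rg_module_def)
  have aadd: "\<And>a b. a \<in> carrier A \<Longrightarrow> b \<in> carrier A \<Longrightarrow> act (a \<oplus>\<^bsub>A\<^esub> b) x = act a x \<oplus>\<^bsub>A\<^esub> act b x"
    using rg x by (simp add: rg_module_def)
  have asm: "\<And>r a. r \<in> carrier R \<Longrightarrow> a \<in> carrier A \<Longrightarrow> act (r \<odot>\<^bsub>A\<^esub> a) x = r \<odot>\<^bsub>A\<^esub> act a x"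
    using rg x by (simp add: rg_module_def)
  have z: "act \<zero>\<^bsub>A\<^esub> x = \<zero>\<^bsub>A\<^esub>"
  proof -
    have "act \<zero>\<^bsub>A\<^esub> x = act \<zero>\<^bsub>A\<^esub> x \<oplus>\<^bsub>A\<^esub> act \<zero>\<^bsub>A\<^esub> x" using aadd[of "\<zero>\<^bsub>A\<^esub>" "\<zero>\<^bsub>A\<^esub>"] by simp
    then show ?thesis using ac[of "\<zero>\<^bsub>A\<^esub>"] AA.add.l_cancel_one' by simp
  qed
  have neg: "act (\<ominus>\<^bsub>A\<^esub> a) x = \<ominus>\<^bsub>A\<^esub> act a x" if a: "a \<in> carrier A" for a
  proof -
    have eq: "act (\<ominus>\<^bsub>A\<^esub> a) x \<oplus>\<^bsub>A\<^esub> act a x = \<zero>\<^bsub>A\<^esub>" using aadd[of "\<ominus>\<^bsub>A\<^esub> a" a] a z AA.l_neg by simp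
    show ?thesis using AA.minus_equality[OF eq ac[OF a] ac[OF AA.a_inv_closed[OF a]]] by simp
  qed
  have sg: "subgroup (centralizer_mod A act x) (add_monoid A)"
  proof (rule AA.add.subgroupI)
    show "centralizer_mod A act x \<subseteq> carrier A" by (auto simp: centralizer_mod_def)
    show "centralizer_mod A act x \<noteq> {}" using z by (auto simp: centralizer_mod_def)
  next
    fix a assume "a \<in> centralizer_mod A act x"
    then show "\<ominus>\<^bsub>A\<^esub> a \<in> centralizer_mod A act x" using neg by (auto simp: centralizer_mod_def)
  next
    fix a b assume "a \<in> centralizer_mod A act x" "b \<in> centralizer_mod A act x"
    then show "a \<oplus>\<^bsub>A\<^esub> b \<in> centralizer_mod A act x" using aadd by (auto simp: centralizer_mod_def)
  qed
  have "r \<odot>\<^bsub>A\<^esub> b \<in> centralizer_mod A act x" if "r \<in> carrier R" "b \<in> centralizer_mod A act x" for r b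
    using that asm A by (auto simp: centralizer_mod_def rmodule_def)
  then show ?thesis using sg unfolding rsubmodule_def by blast
qed

theorem lemma2p2:
  fixes R :: "('r, 'm) ring_scheme"
    and M :: "('r, 'a) module \<Rightarrow> bool"
    and G :: "('g, 'n) monoid_scheme"
    and A :: "('r, 'a) module"
    and act :: "'a \<Rightarrow> 'g \<Rightarrow> 'a"
  assumes "ring R"
    and "formation R M"
    and "\<exists>Q. M Q"
    and "group G"
    and "rg_module R G A act"
  shows "Coc R M G A act \<lhd> G"
proof -
  note rg = assms(5) and F = assms(2)
  have A: "rmodule R A" using rg by (simp add: rg_module_def)
  interpret GG: group G by (rule assms(4))
  interpret AA: abelian_group A using A by (simp add: rmodule_def)
  have actc: "\<And>a x. x \<in> carrier G \<Longrightarrow> a \<in> carrier A \<Longrightarrow> act a x \<in> carrier A"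
    using rg by (simp add: rg_module_def)
  have act1: "\<And>a. a \<in> carrier A \<Longrightarrow> act a \<one>\<^bsub>G\<^esub> = a"
    using rg by (simp add: rg_module_def)
  have actm: "\<And>a x y. x \<in> carrier G \<Longrightarrow> y \<in> carrier G \<Longrightarrow> a \<in> carrier A \<Longrightarrow>
      act (act a x) y = act a (x \<otimes>\<^bsub>G\<^esub> y)"
    using rg by (simp add: rg_module_def)
  have undo: "act (act b (inv\<^bsub>G\<^esub> g)) g = b" if "b \<in> carrier A" "g \<in> carrier G" for b g
    using that actm act1 by simp
  have undo2: "act (act b g) (inv\<^bsub>G\<^esub> g) = b" if "b \<in> carrier A" "g \<in> carrier G" for b g
    using that actm act1 by simp
  let ?C = "centralizer_mod A act"
  have Csub: "\<And>x. x \<in> carrier G \<Longrightarrow> rsubmodule (?C x) R A" using cent_sub[OF rg] by blast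
  have CI1: "?C x \<subseteq> ?C (inv\<^bsub>G\<^esub> x)" if x: "x \<in> carrier G" for x
  proof
    fix a assume "a \<in> ?C x"
    then have a: "a \<in> carrier A" "act a x = a" by (auto simp: centralizer_mod_def)
    have "act a (inv\<^bsub>G\<^esub> x) = act (act a x) (inv\<^bsub>G\<^esub> x)" using a by simp
    also have "\<dots> = a" using undo2 a x by blast
    finally show "a \<in> ?C (inv\<^bsub>G\<^esub> x)" using a by (simp add: centralizer_mod_def)
  qed
  have CI: "?C (inv\<^bsub>G\<^esub> x) = ?C x" if x: "x \<in> carrier G" for x
    using CI1[OF x] CI1[OF GG.inv_closed[OF x]] x by auto
  have Cocc: "Coc R M G A act \<subseteq> carrier G" by (auto simp: Coc_def)
  have one: "\<one>\<^bsub>G\<^esub> \<in> Coc R M G A act"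
  proof -
    obtain Q where MQ: "M Q" using assms(3) by blast
    have Q: "rmodule R Q" using F MQ unfolding formation_def by blast
    interpret QQ: abelian_group Q using Q by (simp add: rmodule_def)
    have EA: "rsubmodule (carrier A) R A"
      using AA.add.subgroup_self A unfolding rsubmodule_def rmodule_def by auto
    interpret EAs: abelian_subgroup "carrier A" A using rsub_abs[OF A EA] .
    have cE: "\<And>x. x \<in> carrier A \<Longrightarrow> carrier A +>\<^bsub>A\<^esub> x = carrier A"
      using EAs.coset_eq_H by blast
    have rz: "\<And>r. r \<in> carrier R \<Longrightarrow> r \<odot>\<^bsub>A\<^esub> \<zero>\<^bsub>A\<^esub> \<in> carrier A"
      using A unfolding rmodule_def by blast
    have K: "rsubmodule {q\<in>carrier Q. (\<lambda>_. \<zero>\<^bsub>A\<^esub>) q \<in> carrier A} R Q \<and>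
         rmod_isomorphic R (quot_mod Q {q\<in>carrier Q. (\<lambda>_. \<zero>\<^bsub>A\<^esub>) q \<in> carrier A}) (quot_mod A (carrier A))"
      by (rule FIT[OF Q A EA]) (auto simp: cE rz)
    then have K': "rsubmodule (carrier Q) R Q" "rmod_isomorphic R (quot_mod Q (carrier Q)) (quot_mod A (carrier A))"
      by simp_all
    have "in_class R M (quot_mod Q (carrier Q))" using F MQ K'(1) unfolding formation_def by blast
    then have "in_class R M (quot_mod A (carrier A))" using K'(2) in_class_trans by blast
    moreover have "?C \<one>\<^bsub>G\<^esub> = carrier A" using act1 by (auto simp: centralizer_mod_def)
    ultimately show ?thesis by (simp add: Coc_def)
  qed
  have inv: "inv\<^bsub>G\<^esub> x \<in> Coc R M G A act" if "x \<in> Coc R M G A act" for x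
    using that CI by (auto simp: Coc_def)
  have mul: "x \<otimes>\<^bsub>G\<^esub> y \<in> Coc R M G A act" if "x \<in> Coc R M G A act" "y \<in> Coc R M G A act" for x y
  proof -
    have x: "x \<in> carrier G" "in_class R M (quot_mod A (?C x))" using that(1) by (auto simp: Coc_def)
    have y: "y \<in> carrier G" "in_class R M (quot_mod A (?C y))" using that(2) by (auto simp: Coc_def)
    have "in_class R M (quot_mod A (\<Inter>{?C x, ?C y}))"
      using F A x y Csub unfolding formation_def by (smt (verit) empty_not_insert finite.emptyI finite.insertI insert_iff singletonD)
    then have D: "in_class R M (quot_mod A (?C x \<inter> ?C y))" by simp
    have Dsub: "rsubmodule (?C x \<inter> ?C y) R A"
      using Csub[OF x(1)] Csub[OF y(1)] AA.add.subgroups_Inter_pair unfolding rsubmodule_def by blast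
    have DE: "?C x \<inter> ?C y \<subseteq> ?C (x \<otimes>\<^bsub>G\<^esub> y)"
      using x(1) y(1) by (auto simp: centralizer_mod_def simp flip: actm)
    have "in_class R M (quot_mod A (?C (x \<otimes>\<^bsub>G\<^esub> y)))"
      using Qlem[OF F A Dsub Csub[OF GG.m_closed[OF x(1) y(1)]] DE D] .
    then show ?thesis using x(1) y(1) by (simp add: Coc_def)
  qed
  have conj: "g \<otimes>\<^bsub>G\<^esub> h \<otimes>\<^bsub>G\<^esub> inv\<^bsub>G\<^esub> g \<in> Coc R M G A act"
    if g: "g \<in> carrier G" and hC: "h \<in> Coc R M G A act" for g h
  proof -
    have h: "h \<in> carrier G" "in_class R M (quot_mod A (?C h))" using hC by (auto simp: Coc_def)
    define y where "y = g \<otimes>\<^bsub>G\<^esub> h \<otimes>\<^bsub>G\<^esub> inv\<^bsub>G\<^esub> g"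
    have yc: "y \<in> carrier G" using g h by (simp add: y_def)
    have ig: "inv\<^bsub>G\<^esub> g \<in> carrier G" using g by simp
    have alg: "inv\<^bsub>G\<^esub> g \<otimes>\<^bsub>G\<^esub> y = h \<otimes>\<^bsub>G\<^esub> inv\<^bsub>G\<^esub> g"
      using g h ig by (simp add: y_def GG.m_assoc GG.inv_solve_left')
    have Keq: "{a\<in>carrier A. act a (inv\<^bsub>G\<^esub> g) \<in> ?C y} = ?C h"
    proof (rule equalityI; rule subsetI)
      fix a assume "a \<in> {a\<in>carrier A. act a (inv\<^bsub>G\<^esub> g) \<in> ?C y}"
      then have a: "a \<in> carrier A" "act (act a (inv\<^bsub>G\<^esub> g)) y = act a (inv\<^bsub>G\<^esub> g)"
        by (auto simp: centralizer_mod_def)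
      have "act (act a h) (inv\<^bsub>G\<^esub> g) = act a (inv\<^bsub>G\<^esub> g)"
        using a actm[OF ig yc a(1)] actm[OF h(1) ig a(1)] alg by simp
      then have "act (act (act a h) (inv\<^bsub>G\<^esub> g)) g = act (act a (inv\<^bsub>G\<^esub> g)) g" by simp
      then have "act a h = a" using undo a(1) actc[OF h(1) a(1)] g by simp
      then show "a \<in> ?C h" using a by (simp add: centralizer_mod_def)
    next
      fix a assume "a \<in> ?C h"
      then have a: "a \<in> carrier A" "act a h = a" by (auto simp: centralizer_mod_def)
      have "act (act a (inv\<^bsub>G\<^esub> g)) y = act (act a h) (inv\<^bsub>G\<^esub> g)"
        using actm[OF ig yc a(1)] actm[OF h(1) ig a(1)] alg by simp
      then have "act (act a (inv\<^bsub>G\<^esub> g)) y = act a (inv\<^bsub>G\<^esub> g)" using a by simp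
      then show "a \<in> {a\<in>carrier A. act a (inv\<^bsub>G\<^esub> g) \<in> ?C y}"
        using a actc[OF ig a(1)] by (simp add: centralizer_mod_def)
    qed
    have K: "rsubmodule {a\<in>carrier A. act a (inv\<^bsub>G\<^esub> g) \<in> ?C y} R A \<and>
         rmod_isomorphic R (quot_mod A {a\<in>carrier A. act a (inv\<^bsub>G\<^esub> g) \<in> ?C y}) (quot_mod A (?C y))"
    proof (rule FIT[OF A A Csub[OF yc]])
      show "act q (inv\<^bsub>G\<^esub> g) \<in> carrier A" if "q \<in> carrier A" for q using actc[OF ig that] .
      show "?C y +>\<^bsub>A\<^esub> act (p \<oplus>\<^bsub>A\<^esub> q) (inv\<^bsub>G\<^esub> g) = ?C y +>\<^bsub>A\<^esub> (act p (inv\<^bsub>G\<^esub> g) \<oplus>\<^bsub>A\<^esub> act q (inv\<^bsub>G\<^esub> g))"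
        if "p \<in> carrier A" "q \<in> carrier A" for p q using rg ig that by (simp add: rg_module_def)
      show "?C y +>\<^bsub>A\<^esub> act (r \<odot>\<^bsub>A\<^esub> q) (inv\<^bsub>G\<^esub> g) = ?C y +>\<^bsub>A\<^esub> (r \<odot>\<^bsub>A\<^esub> act q (inv\<^bsub>G\<^esub> g))"
        if "r \<in> carrier R" "q \<in> carrier A" for r q using rg ig that by (simp add: rg_module_def)
      show "\<exists>q\<in>carrier A. ?C y +>\<^bsub>A\<^esub> act q (inv\<^bsub>G\<^esub> g) = ?C y +>\<^bsub>A\<^esub> a" if "a \<in> carrier A" for a
        using undo2[OF that g] actc[OF g that] by metis
    qed
    then have "rmod_isomorphic R (quot_mod A (?C h)) (quot_mod A (?C y))" using Keq by simp
    then have "in_class R M (quot_mod A (?C y))" using h(2) in_class_trans by blast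
    then show ?thesis using yc by (simp add: Coc_def y_def)
  qed
  have sg: "subgroup (Coc R M G A act) G"
    by (rule GG.subgroupI[OF Cocc]) (use one inv mul in auto)
  show ?thesis using GG.normal_inv_iff sg conj by blast
qed

end
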